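(* Let $(A,\to,1)$ be an algebra of type $(2,0)$. Then: (a) (Re), (L), (Ex) and ( ** ) imply (p-2); (b) (Ex), (B), ( * ) and (pi) imply (p-1); (c) (p-1), (p-2) and (An) imply (pimpl); (d) (Re), (Ex), (B), ( ** ), ( * ), (L), (An) and (pi) together imply (pimpl).
   Context: Properties, required for all $x,y,z\in A$: (Re) $x\to x=1$; (L) $x\to 1=1$; (Ex) $x\to(y\to z)=y\to(x\to z)$; (B) $(y\to z)\to((x\to y)\to(x\to z))=1$; ( * ) $y\to z=1$ implies $(x\to y)\to(x\to z)=1$; ( ** ) $y\to z=1$ implies $(z\to x)\to(y\to x)=1$; (An) $x\to y=1$ and $y\to x=1$ imply $x=y$; (pimpl) $x\to(y\to z)=(x\to y)\to(x\to z)$; (pi) $y\to(y\to x)=y\to x$; (p-1) $(x\to(y\to z))\to((x\to y)\to(x\to z))=1$; (p-2) $((x\to y)\to(x\to z))\to(x\to(y\to z))=1$. *)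

theory Defs
  imports Main
begin

definition alg20 :: "'a set \<Rightarrow> ('a \<Rightarrow> 'a \<Rightarrow> 'a) \<Rightarrow> 'a \<Rightarrow> bool" where
  "alg20 A imp one \<longleftrightarrow> one \<in> A \<and> (\<forall>x\<in>A. \<forall>y\<in>A. imp x y \<in> A)"

definition prop_Re where
  "prop_Re A imp one \<longleftrightarrow> (\<forall>x\<in>A. imp x x = one)"
definition prop_L where
  "prop_L A imp one \<longleftrightarrow> (\<forall>x\<in>A. imp x one = one)"
definition prop_Ex where
  "prop_Ex A imp (one::'a) \<longleftrightarrow> (\<forall>x\<in>A. \<forall>y\<in>A. \<forall>z\<in>A. imp x (imp y z) = imp y (imp x z))"
definition prop_B where
  "prop_B A imp one \<longleftrightarrow> (\<forall>x\<in>A. \<forall>y\<in>A. \<forall>z\<in>A. imp (imp y z) (imp (imp x y) (imp x z)) = one)"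
definition prop_star where
  "prop_star A imp one \<longleftrightarrow> (\<forall>x\<in>A. \<forall>y\<in>A. \<forall>z\<in>A. imp y z = one \<longrightarrow> imp (imp x y) (imp x z) = one)"
definition prop_starstar where
  "prop_starstar A imp one \<longleftrightarrow> (\<forall>x\<in>A. \<forall>y\<in>A. \<forall>z\<in>A. imp y z = one \<longrightarrow> imp (imp z x) (imp y x) = one)"
definition prop_An where
  "prop_An A imp one \<longleftrightarrow> (\<forall>x\<in>A. \<forall>y\<in>A. imp x y = one \<and> imp y x = one \<longrightarrow> x = y)"
definition prop_pimpl where
  "prop_pimpl A imp (one::'a) \<longleftrightarrow> (\<forall>x\<in>A. \<forall>y\<in>A. \<forall>z\<in>A. imp x (imp y z) = imp (imp x y) (imp x z))"
definition prop_pi where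
  "prop_pi A imp (one::'a) \<longleftrightarrow> (\<forall>x\<in>A. \<forall>y\<in>A. imp y (imp y x) = imp y x)"
definition prop_p1 where
  "prop_p1 A imp one \<longleftrightarrow> (\<forall>x\<in>A. \<forall>y\<in>A. \<forall>z\<in>A. imp (imp x (imp y z)) (imp (imp x y) (imp x z)) = one)"
definition prop_p2 where
  "prop_p2 A imp one \<longleftrightarrow> (\<forall>x\<in>A. \<forall>y\<in>A. \<forall>z\<in>A. imp (imp (imp x y) (imp x z)) (imp x (imp y z)) = one)"

end

theory Submission
  imports Defs
begin

lemma partA:
  assumes "alg20 A imp one" "prop_Re A imp one" "prop_L A imp one" "prop_Ex A imp one" "prop_starstar A imp one"
  shows "prop_p2 A imp one"
  unfolding prop_p2_def
proof (intro ballI)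
  fix x y z assume xyz: "x \<in> A" "y \<in> A" "z \<in> A"
  have cl: "\<And>a b. a \<in> A \<Longrightarrow> b \<in> A \<Longrightarrow> imp a b \<in> A" and one: "one \<in> A"
    using assms(1) unfolding alg20_def by auto
  have "imp y (imp x y) = imp x (imp y y)" using assms(4) xyz unfolding prop_Ex_def by auto
  also have "\<dots> = one" using assms(2,3) xyz cl unfolding prop_Re_def prop_L_def by auto
  finally have h: "imp y (imp x y) = one" .
  have "imp (imp (imp x y) (imp x z)) (imp y (imp x z)) = one"
    using assms(5) h xyz cl[OF xyz(1) xyz(2)] cl[OF xyz(1) xyz(3)] unfolding prop_starstar_def by simp
  moreover have "imp y (imp x z) = imp x (imp y z)" using assms(4) xyz unfolding prop_Ex_def by auto
  ultimately show "imp (imp (imp x y) (imp x z)) (imp x (imp y z)) = one" by simp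
qed

lemma partB:
  assumes "alg20 A imp one" "prop_Ex A imp one" "prop_B A imp one" "prop_star A imp one" "prop_pi A imp one"
  shows "prop_p1 A imp one"
  unfolding prop_p1_def
proof (intro ballI)
  fix x y z assume xyz: "x \<in> A" "y \<in> A" "z \<in> A"
  have cl: "\<And>a b. a \<in> A \<Longrightarrow> b \<in> A \<Longrightarrow> imp a b \<in> A"
    using assms(1) unfolding alg20_def by auto
  have h: "imp (imp y z) (imp (imp x y) (imp x z)) = one" using assms(3) xyz unfolding prop_B_def by auto
  have "imp (imp x (imp y z)) (imp x (imp (imp x y) (imp x z))) = one"
    using assms(4) h xyz cl[OF xyz(1) xyz(2)] cl[OF xyz(2) xyz(3)] cl[OF xyz(1) xyz(3)]
      cl[OF cl[OF xyz(1) xyz(2)] cl[OF xyz(1) xyz(3)]] unfolding prop_star_def by simp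
  moreover have "imp x (imp (imp x y) (imp x z)) = imp (imp x y) (imp x (imp x z))"
    using assms(2) xyz cl unfolding prop_Ex_def by auto
  moreover have "imp x (imp x z) = imp x z" using assms(5) xyz unfolding prop_pi_def by auto
  ultimately show "imp (imp x (imp y z)) (imp (imp x y) (imp x z)) = one" by simp
qed

lemma partC:
  assumes "alg20 A imp one" "prop_p1 A imp one" "prop_p2 A imp one" "prop_An A imp one"
  shows "prop_pimpl A imp one"
  unfolding prop_pimpl_def
proof (intro ballI)
  fix x y z assume xyz: "x \<in> A" "y \<in> A" "z \<in> A"
  have cl: "\<And>a b. a \<in> A \<Longrightarrow> b \<in> A \<Longrightarrow> imp a b \<in> A"
    using assms(1) unfolding alg20_def by auto
  have a: "imp x (imp y z) \<in> A" "imp (imp x y) (imp x z) \<in> A" using cl xyz by auto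
  have "imp (imp x (imp y z)) (imp (imp x y) (imp x z)) = one" using assms(2) xyz unfolding prop_p1_def by auto
  moreover have "imp (imp (imp x y) (imp x z)) (imp x (imp y z)) = one" using assms(3) xyz unfolding prop_p2_def by auto
  ultimately show "imp x (imp y z) = imp (imp x y) (imp x z)"
    using assms(4) a unfolding prop_An_def by blast
qed

theorem proposition6p3:
  fixes A :: "'a set" and imp :: "'a \<Rightarrow> 'a \<Rightarrow> 'a" and one :: 'a
  assumes "alg20 A imp one"
  shows "(prop_Re A imp one \<and> prop_L A imp one \<and> prop_Ex A imp one \<and> prop_starstar A imp one
            \<longrightarrow> prop_p2 A imp one)
       \<and> (prop_Ex A imp one \<and> prop_B A imp one \<and> prop_star A imp one \<and> prop_pi A imp one
            \<longrightarrow> prop_p1 A imp one)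
       \<and> (prop_p1 A imp one \<and> prop_p2 A imp one \<and> prop_An A imp one
            \<longrightarrow> prop_pimpl A imp one)
       \<and> (prop_Re A imp one \<and> prop_Ex A imp one \<and> prop_B A imp one \<and> prop_starstar A imp one
          \<and> prop_star A imp one \<and> prop_L A imp one \<and> prop_An A imp one \<and> prop_pi A imp one
            \<longrightarrow> prop_pimpl A imp one)"
  using partA[OF assms] partB[OF assms] partC[OF assms] by blast

end
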